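(* Let $k\ge1$ and $c\in\mathcal{S}_k^\alpha\setminus\{\mathbf{0}\}$. Then $w_H(c)=q^{sk}-q^{\nu(c)+s(k-1)}$.
   Context: Let $R$ be a finite commutative chain ring with maximal ideal $\langle\gamma\rangle$, nilpotency index $s$ and residue field $R/\langle\gamma\rangle\cong\mathbb{F}_q$. Fix coset representatives $T=\{e_0,\dots,e_{q-1}\}$ with $e_0=0,e_1=1$, ordered $e_0<\dots<e_{q-1}$; each $r\in R$ is uniquely $\sum_{i=0}^{s-1}r_i\gamma^i$, $r_i\in T$; order $R$ by $x>y$ iff $x_i>y_i$ in $T$ for the largest $i$ with $x_i\neq y_i$; list $R=\{\rho_0,\dots,\rho_{q^s-1}\}$ increasingly. $\mathbf{a}^{(m)}$ is the constant vector of length $m$. Define $G_1^\alpha=(\rho_0\ \cdots\ \rho_{q^s-1})$ and, for $k>1$, $G_k^\alpha$ as the $k\times q^{sk}$ matrix of $q^s$ column blocks, the $j$-th having first row $\boldsymbol{\rho_j}^{(q^{s(k-1)})}$ and $G_{k-1}^\alpha$ below. $\mathcal{S}_k^\alpha$ is the $R$-submodule of $R^{q^{sk}}$ generated by the rows of $G_k^\alpha$. $w_H$ is the Hamming weight (number of nonzero coordinates). Valuation: for $x\in R\setminus\{0\}$, $\nu(x)$ is the largest $m$ with $x=\gamma^m\beta$, $\beta$ a unit; $\nu(0)=\infty$; for $x\in R^n$, $\nu(x)=\min_i\nu(x_i)$. *)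

theory Defs
  imports "HOL-Library.Extended_Nat"
begin

text \<open>Standing setup: R is the (finite, commutative) type 'a; g is the generator gamma of
the maximal ideal; s is the nilpotency index of g; e enumerates the coset representatives
T = {e 0, ..., e (q-1)} of R/<g> (ordered e 0 < e 1 < ... < e (q-1)), with e 0 = 0, e 1 = 1;
q is the size of the residue field.\<close>

definition chain_ring_setup :: "'a::{comm_ring_1,finite} \<Rightarrow> nat \<Rightarrow> nat \<Rightarrow> (nat \<Rightarrow> 'a) \<Rightarrow> bool" where
  "chain_ring_setup g s q e \<longleftrightarrow>
     s \<ge> 1 \<and> g ^ s = 0 \<and> g ^ (s - 1) \<noteq> 0 \<and>
     (\<forall>x. (\<not> x dvd 1) \<longleftrightarrow> g dvd x) \<and>
     inj_on e {..<q} \<and> e 0 = 0 \<and> e 1 = 1 \<and>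
     (\<forall>x. \<exists>!i. i < q \<and> g dvd (x - e i))"

definition digits :: "'a::comm_ring_1 \<Rightarrow> nat \<Rightarrow> nat \<Rightarrow> (nat \<Rightarrow> 'a) \<Rightarrow> 'a \<Rightarrow> 'a list" where
  "digits g s q e r = (THE ds. length ds = s \<and> set ds \<subseteq> e ` {..<q} \<and> r = (\<Sum>i<s. ds ! i * g ^ i))"

definition tidx :: "nat \<Rightarrow> (nat \<Rightarrow> 'a) \<Rightarrow> 'a \<Rightarrow> nat" where
  "tidx q e t = (THE j. j < q \<and> e j = t)"

definition ring_less :: "'a::comm_ring_1 \<Rightarrow> nat \<Rightarrow> nat \<Rightarrow> (nat \<Rightarrow> 'a) \<Rightarrow> 'a \<Rightarrow> 'a \<Rightarrow> bool" where
  "ring_less g s q e x y \<longleftrightarrow>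
     (\<exists>i<s. digits g s q e x ! i \<noteq> digits g s q e y ! i \<and>
        (\<forall>j. i < j \<and> j < s \<longrightarrow> digits g s q e x ! j = digits g s q e y ! j) \<and>
        tidx q e (digits g s q e x ! i) < tidx q e (digits g s q e y ! i))"

definition rho :: "'a::comm_ring_1 \<Rightarrow> nat \<Rightarrow> nat \<Rightarrow> (nat \<Rightarrow> 'a) \<Rightarrow> nat \<Rightarrow> 'a" where
  "rho g s q e j = (THE r. card {y. ring_less g s q e y r} = j)"

text \<open>Entry (row r, column c) of G_k (rows 0..k-1, columns 0..q^(sk)-1).
  G_(k+1): q^s column blocks of width (q^s)^k; block j has first row rho j and G_k below.\<close>
fun genmat :: "'a::comm_ring_1 \<Rightarrow> nat \<Rightarrow> nat \<Rightarrow> (nat \<Rightarrow> 'a) \<Rightarrow> nat \<Rightarrow> nat \<Rightarrow> nat \<Rightarrow> 'a" where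
  "genmat g s q e 0 r c = 0"
| "genmat g s q e (Suc k) r c =
     (if r = 0 then rho g s q e (c div (q ^ s) ^ k)
      else genmat g s q e k (r - 1) (c mod (q ^ s) ^ k))"

definition code :: "'a::comm_ring_1 \<Rightarrow> nat \<Rightarrow> nat \<Rightarrow> (nat \<Rightarrow> 'a) \<Rightarrow> nat \<Rightarrow> 'a list set" where
  "code g s q e k =
     {map (\<lambda>c. \<Sum>r<k. a r * genmat g s q e k r c) [0..<q ^ (s * k)] | a. True}"

definition hamming_weight :: "'a::zero list \<Rightarrow> nat" where
  "hamming_weight v = length (filter (\<lambda>x. x \<noteq> 0) v)"

definition val :: "'a::comm_ring_1 \<Rightarrow> 'a \<Rightarrow> enat" where
  "val g x = (if x = 0 then \<infinity> else enat (GREATEST m. \<exists>b. b dvd 1 \<and> x = g ^ m * b))"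

definition val_vec :: "'a::comm_ring_1 \<Rightarrow> 'a list \<Rightarrow> enat" where
  "val_vec g v = (INF x\<in>set v. val g x)"

end

theory Submission
  imports Defs "HOL-Library.Function_Algebras"
begin

locale cr =
  fixes g :: "'a::{comm_ring_1,finite}" and s q :: nat and e :: "nat \<Rightarrow> 'a"
  assumes crs: "chain_ring_setup g s q e"
begin

lemma s_ge1: "s \<ge> 1" and gs0: "g ^ s = 0" and gs1: "g ^ (s - 1) \<noteq> 0"
  and unit_iff: "\<And>x. (\<not> x dvd 1) \<longleftrightarrow> g dvd x"
  and e_inj: "inj_on e {..<q}" and e0: "e 0 = 0" and e1: "e 1 = 1"
  and rep: "\<And>x. \<exists>!i. i < q \<and> g dvd (x - e i)"
  using crs unfolding chain_ring_setup_def by auto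

lemma q_pos: "q > 0"
  using rep[of 0] by auto

lemma g_nonunit: "\<not> g dvd 1"
  using unit_iff[of g] by auto

lemma gpow_nz: "j < s \<Longrightarrow> g ^ j \<noteq> 0"
proof
  assume j: "j < s" and z: "g ^ j = 0"
  have "s - 1 = j + (s - 1 - j)" using j by simp
  then have "g ^ (s - 1) = g ^ j * g ^ (s - 1 - j)" by (metis power_add)
  with z gs1 show False by simp
qed

lemma gpow_big: "n \<ge> s \<Longrightarrow> g ^ n = 0"
  by (metis gs0 le_add_diff_inverse mult_zero_left power_add)

definition T :: "'a set" where "T = e ` {..<q}"

lemma zero_T: "0 \<in> T"
  using e0 q_pos unfolding T_def by (metis image_eqI lessThan_iff)

lemma T_eq: "x \<in> T \<Longrightarrow> y \<in> T \<Longrightarrow> g dvd (x - y) \<Longrightarrow> x = y"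
proof -
  assume "x \<in> T" "y \<in> T" and d: "g dvd (x - y)"
  then obtain i j where ij: "i < q" "j < q" "x = e i" "y = e j" by (auto simp: T_def)
  have "g dvd (x - e i)" using ij by simp
  moreover have "g dvd (x - e j)" using ij d by simp
  ultimately have "i = j" using rep[of x] ij by blast
  then show ?thesis using ij by simp
qed

lemma unit_kill: "u dvd (1::'a) \<Longrightarrow> z * u = 0 \<Longrightarrow> z = 0"
  by (metis dvd_def mult.assoc mult_1_right mult_zero_left)

lemma key: "j < s \<Longrightarrow> x \<in> T \<Longrightarrow> y \<in> T \<Longrightarrow> g ^ j * (x - y + g * w) = 0 \<Longrightarrow> x = y"
proof (rule ccontr)
  assume a: "j < s" "x \<in> T" "y \<in> T" "g ^ j * (x - y + g * w) = 0" "x \<noteq> y"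
  have "\<not> g dvd (x - y)" using T_eq a by blast
  then have "\<not> g dvd (x - y + g * w)"
    by (metis add_diff_cancel_right' dvd_diff dvd_triv_left)
  then have "(x - y + g*w) dvd 1" using unit_iff by blast
  then have "g ^ j = 0" using unit_kill a(4) by blast
  with gpow_nz a(1) show False by blast
qed

definition I :: "nat \<Rightarrow> 'a set" where "I j = range (\<lambda>t. g ^ j * t)"

lemma I_s: "I s = {0}"
  unfolding I_def using gs0 by auto

lemma I_step: "j < s \<Longrightarrow> card (I j) = q * card (I (Suc j))"
proof -
  assume j: "j < s"
  let ?f = "\<lambda>(t, y). g ^ j * e t + y"
  have img: "?f ` ({..<q} \<times> I (Suc j)) = I j"
  proof (rule set_eqI, rule iffI)
    fix x assume "x \<in> ?f ` ({..<q} \<times> I (Suc j))"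
    then obtain t w where "x = g^j * e t + g^(Suc j) * w" by (auto simp: I_def)
    then have "x = g^j * (e t + g * w)" by (simp add: algebra_simps)
    then show "x \<in> I j" by (auto simp: I_def)
  next
    fix x assume "x \<in> I j"
    then obtain r where r: "x = g^j * r" by (auto simp: I_def)
    obtain i where i: "i < q" "g dvd (r - e i)" using rep[of r] by blast
    then obtain w where w: "r - e i = g * w" by (auto elim: dvdE)
    have "r = e i + g * w" using w by (simp add: algebra_simps)
    then have "x = g^j * e i + g ^ Suc j * w" using r by (simp add: algebra_simps)
    then show "x \<in> ?f ` ({..<q} \<times> I (Suc j))" using i
      by (auto simp: I_def image_iff intro!: bexI[of _ "(i, g ^ Suc j * w)"])
  qed
  have inj: "inj_on ?f ({..<q} \<times> I (Suc j))"
  proof (rule inj_onI)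
    fix a b assume a: "a \<in> {..<q} \<times> I (Suc j)" and b: "b \<in> {..<q} \<times> I (Suc j)" and eq: "?f a = ?f b"
    obtain t w where ta: "a = (t, g ^ Suc j * w)" "t < q" using a by (auto simp: I_def)
    obtain t' w' where tb: "b = (t', g ^ Suc j * w')" "t' < q" using b by (auto simp: I_def)
    have "g ^ j * (e t - e t' + g * (w - w')) = 0" using eq ta tb by (simp add: algebra_simps)
    then have "e t = e t'" using key[OF j] ta tb by (auto simp: T_def)
    then have "t = t'" using e_inj ta tb by (auto dest: inj_onD)
    then show "a = b" using eq ta tb by simp
  qed
  have "card (I j) = card ({..<q} \<times> I (Suc j))" using card_image[OF inj] img by simp
  then show ?thesis by (simp add: card_cartesian_product)
qed

lemma card_I: "j \<le> s \<Longrightarrow> card (I j) = q ^ (s - j)"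
proof (induction "s - j" arbitrary: j)
  case 0
  then have "j = s" by simp
  then show ?case using I_s by simp
next
  case (Suc n)
  then have j: "j < s" and n: "n = s - Suc j" by auto
  then have "card (I (Suc j)) = q ^ (s - Suc j)" using Suc.hyps(1)[of "Suc j"] by simp
  then show ?case using I_step[OF j] j by (simp add: Suc_diff_Suc power_Suc[symmetric])
qed

lemma card_UNIV_R: "card (UNIV :: 'a set) = q ^ s"
proof -
  have "I 0 = UNIV" unfolding I_def by auto
  then show ?thesis using card_I[of 0] by simp
qed

end


context cr
begin

lemma unit_sub: "u dvd 1 \<Longrightarrow> d \<ge> 1 \<Longrightarrow> (u - g ^ d * u') dvd 1"
proof -
  assume u: "u dvd 1" and d: "d \<ge> 1"
  have gd: "g dvd g ^ d * u'" using d by (simp add: dvd_mult2 dvd_power)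
  show ?thesis
  proof (rule ccontr)
    assume "\<not> (u - g ^ d * u') dvd 1"
    then have "g dvd (u - g^d*u')" using unit_iff by blast
    then have "g dvd u" using gd by (metis diff_add_cancel dvd_add)
    then have "g dvd 1" using u dvd_trans by blast
    with g_nonunit show False by simp
  qed
qed

lemma val_exists: "x \<noteq> 0 \<Longrightarrow> \<exists>n u. n < s \<and> u dvd 1 \<and> x = g ^ n * u"
proof -
  assume x: "x \<noteq> 0"
  let ?P = "\<lambda>n. g ^ n dvd x"
  have bound: "\<And>n. ?P n \<Longrightarrow> n < s"
  proof (rule ccontr)
    fix n assume "?P n" "\<not> n < s"
    then have "g ^ n = 0" using gpow_big by simp
    with \<open>?P n\<close> x show False by simp
  qed
  have P0: "?P 0" by simp
  define n where "n = (GREATEST n. ?P n)"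
  have Pn: "?P n" unfolding n_def
    using GreatestI_nat[of ?P 0 s] P0 bound less_imp_le by blast
  have le: "\<And>m. ?P m \<Longrightarrow> m \<le> n" unfolding n_def
    using Greatest_le_nat[of ?P _ s] bound less_imp_le by blast
  obtain u where u: "x = g^n * u" using Pn by (auto elim: dvdE)
  have "u dvd 1"
  proof (rule ccontr)
    assume "\<not> u dvd 1"
    then obtain v where "u = g * v" using unit_iff by (auto elim: dvdE)
    then have "x = g^(Suc n) * v" using u by (simp add: algebra_simps)
    then have "?P (Suc n)" by simp
    then show False using le[of "Suc n"] by simp
  qed
  then show ?thesis using u bound[OF Pn] by blast
qed

lemma val_unique: "x \<noteq> 0 \<Longrightarrow> u dvd 1 \<Longrightarrow> u' dvd 1 \<Longrightarrow> x = g^n*u \<Longrightarrow> x = g^n' * u' \<Longrightarrow> n \<le> n'"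
proof (rule ccontr)
  assume a: "x \<noteq> 0" "u dvd 1" "u' dvd 1" "x = g^n*u" "x = g^n'*u'" "\<not> n \<le> n'"
  have "g^n = g^n' * g^(n-n')" using a(6) by (simp flip: power_add)
  then have "g^n' * (u' - g^(n-n')*u) = g^n' * u' - g^n * u" by (simp add: algebra_simps)
  also have "\<dots> = 0" using a(4,5) by simp
  finally have "g^n' * (u' - g^(n-n')*u) = 0" .
  moreover have "(u' - g^(n-n')*u) dvd 1" using unit_sub a(2,3,6) by simp
  ultimately have "g^n' = 0" using unit_kill by blast
  then show False using a(1,5) by simp
qed

lemma val_eq: "x \<noteq> 0 \<Longrightarrow> u dvd 1 \<Longrightarrow> x = g^n*u \<Longrightarrow> val g x = enat n"
proof -
  assume a: "x \<noteq> 0" "u dvd 1" "x = g^n*u"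
  have "(GREATEST m. \<exists>b. b dvd 1 \<and> x = g ^ m * b) = n"
  proof (rule Greatest_equality)
    show "\<exists>b. b dvd 1 \<and> x = g ^ n * b" using a by blast
    fix y assume "\<exists>b. b dvd 1 \<and> x = g ^ y * b"
    then obtain b where "b dvd 1" "x = g ^ y * b" by blast
    then show "y \<le> n" using val_unique[of x b u y n] a by simp
  qed
  then show ?thesis using a(1) by (simp add: val_def)
qed

lemma val_zero: "val g 0 = \<infinity>"
  by (simp add: val_def)

lemma val_fin: "x \<noteq> 0 \<Longrightarrow> \<exists>n u. n < s \<and> u dvd 1 \<and> x = g ^ n * u \<and> val g x = enat n"
proof -
  assume x: "x \<noteq> 0"
  obtain n u where "n < s" "u dvd 1" "x = g ^ n * u" using val_exists[OF x] by blast
  moreover have "val g x = enat n" using val_eq[OF x] calculation by blast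
  ultimately show ?thesis by blast
qed

lemma val_ge: "x \<noteq> 0 \<Longrightarrow> x = g^j * y \<Longrightarrow> enat j \<le> val g x"
proof -
  assume x: "x \<noteq> 0" and xy: "x = g^j * y"
  then have "y \<noteq> 0" by auto
  then obtain n u where "u dvd 1" "y = g^n * u" using val_exists by blast
  then have "x = g^(j+n) * u" "u dvd 1" using xy by (simp_all add: power_add mult.assoc)
  then have "val g x = enat (j + n)" using val_eq x by blast
  then show ?thesis by simp
qed

lemma expand_exists: "\<exists>d. (\<forall>i. d i \<in> T) \<and> (\<exists>w. r = (\<Sum>i<n. d i * g^i) + g^n * w)"
proof (induction n)
  case 0 show ?case using zero_T by (intro exI[of _ "\<lambda>_. 0"]) auto
next
  case (Suc n)
  then obtain d w where d: "\<forall>i. d i \<in> T" "r = (\<Sum>i<n. d i * g^i) + g^n * w" by blast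
  obtain i where i: "i < q" "g dvd (w - e i)" using rep[of w] by blast
  then obtain w' where w': "w - e i = g * w'" by (auto elim: dvdE)
  have wi: "w = e i + g * w'" using w' by (simp add: algebra_simps)
  let ?d = "d(n := e i)"
  have s1: "(\<Sum>j<n. ?d j * g^j) = (\<Sum>j<n. d j * g^j)" by (rule sum.cong) auto
  have "(\<Sum>j<Suc n. ?d j * g^j) = (\<Sum>j<n. d j * g^j) + e i * g^n" using s1 by simp
  then have "r = (\<Sum>j<Suc n. ?d j * g^j) + g^(Suc n) * w'" using d(2) wi
    by (simp add: algebra_simps)
  moreover have "\<forall>j. ?d j \<in> T" using d(1) i(1) by (auto simp: T_def)
  ultimately show ?case by blast
qed

lemma expand_unique: "j + n \<le> s \<Longrightarrow> (\<forall>i<n. d i \<in> T \<and> d' i \<in> T) \<Longrightarrow>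
   g^j * (\<Sum>i<n. (d i - d' i) * g^i) = 0 \<Longrightarrow> \<forall>i<n. d i = d' i"
proof (induction n arbitrary: j d d')
  case 0 then show ?case by simp
next
  case (Suc n)
  let ?S = "(\<Sum>i<n. (d (Suc i) - d' (Suc i)) * g^i)"
  have s: "(\<Sum>i<Suc n. (d i - d' i) * g^i) = (d 0 - d' 0) + g * ?S"
    apply (subst sum.lessThan_Suc_shift)
    apply (simp add: sum_distrib_left mult_ac)
    done
  have "d 0 = d' 0" using key[of j "d 0" "d' 0" ?S] Suc.prems s by auto
  then have "g^j * (g * ?S) = 0" using Suc.prems(3)[unfolded s] by simp
  then have "g^(Suc j) * ?S = 0" by (simp add: mult_ac)
  moreover have "\<forall>i<n. d (Suc i) \<in> T \<and> d' (Suc i) \<in> T" using Suc.prems(2) by simp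
  moreover have "Suc j + n \<le> s" using Suc.prems(1) by simp
  ultimately have IH: "\<forall>i<n. d (Suc i) = d' (Suc i)"
    using Suc.IH[of "Suc j" "\<lambda>i. d (Suc i)" "\<lambda>i. d' (Suc i)"] by blast
  show ?case
  proof (intro allI impI)
    fix i assume "i < Suc n"
    then show "d i = d' i" using IH \<open>d 0 = d' 0\<close> by (cases i) auto
  qed
qed

lemma digits_prop: "length (digits g s q e r) = s \<and> set (digits g s q e r) \<subseteq> T \<and>
   r = (\<Sum>i<s. digits g s q e r ! i * g ^ i)"
  unfolding digits_def T_def[symmetric]
proof (rule theI')
  obtain d w where d: "\<forall>i. d i \<in> T" "r = (\<Sum>i<s. d i * g^i) + g^s * w"
    using expand_exists by blast
  define ds0 where "ds0 = map d [0..<s]"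
  have "(\<Sum>i<s. ds0 ! i * g ^ i) = (\<Sum>i<s. d i * g^i)" unfolding ds0_def by (rule sum.cong) auto
  moreover have "r = (\<Sum>i<s. d i * g^i)" using d(2) gs0 by simp
  moreover have "set ds0 \<subseteq> T" unfolding ds0_def using d(1) by auto
  moreover have "length ds0 = s" unfolding ds0_def by simp
  ultimately have ex: "length ds0 = s \<and> set ds0 \<subseteq> T \<and> r = (\<Sum>i<s. ds0 ! i * g ^ i)"
    by simp
  have un: "ds = ds'" if a: "length ds = s \<and> set ds \<subseteq> T \<and> r = (\<Sum>i<s. ds ! i * g ^ i)"
    and b: "length ds' = s \<and> set ds' \<subseteq> T \<and> r = (\<Sum>i<s. ds' ! i * g ^ i)" for ds ds'
  proof -
    have "(\<Sum>i<s. (ds ! i - ds' ! i) * g^i) = (\<Sum>i<s. ds ! i * g ^ i) - (\<Sum>i<s. ds' ! i * g ^ i)"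
      by (simp add: sum_subtractf left_diff_distrib)
    also have "\<dots> = 0" using a b by simp
    finally have z: "g^0 * (\<Sum>i<s. (ds ! i - ds' ! i) * g^i) = 0" by simp
    have m: "\<forall>i<s. ds ! i \<in> T \<and> ds' ! i \<in> T"
    proof (intro allI impI conjI)
      fix i assume i: "i < s"
      show "ds ! i \<in> T" using a i nth_mem[of i ds] by auto
      show "ds' ! i \<in> T" using b i nth_mem[of i ds'] by auto
    qed
    have "\<forall>i<s. ds ! i = ds' ! i"
      using expand_unique[of 0 s "\<lambda>i. ds ! i" "\<lambda>i. ds' ! i", OF _ m z] by simp
    then show ?thesis using a b by (simp add: nth_equalityI)
  qed
  show "\<exists>!ds. length ds = s \<and> set ds \<subseteq> T \<and> r = (\<Sum>i<s. ds ! i * g ^ i)"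
  proof (rule ex1I[of _ ds0])
    show "length ds0 = s \<and> set ds0 \<subseteq> T \<and> r = (\<Sum>i<s. ds0 ! i * g ^ i)" by (rule ex)
    fix ds assume "length ds = s \<and> set ds \<subseteq> T \<and> r = (\<Sum>i<s. ds ! i * g ^ i)"
    then show "ds = ds0" using un ex by blast
  qed
qed

end


lemma base_bound: "(\<forall>i<n. f i < (q::nat)) \<Longrightarrow> (\<Sum>i<n. f i * q^i) < q^n"
proof (induction n)
  case 0 then show ?case by simp
next
  case (Suc n)
  have h: "\<forall>i<n. f i < q" using Suc.prems by simp
  have IH: "(\<Sum>i<n. f i * q^i) < q^n" using Suc.IH[OF h] .
  have "f n < q" using Suc.prems by simp
  then have fn: "f n + 1 \<le> q" by simp
  have "(\<Sum>i<Suc n. f i * q^i) = (\<Sum>i<n. f i * q^i) + f n * q^n" by simp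
  also have "\<dots> < q^n + f n * q^n" using IH by linarith
  also have "\<dots> = (f n + 1) * q^n" by simp
  also have "\<dots> \<le> q * q^n" using fn by (rule mult_right_mono) simp
  finally show ?case by simp
qed

lemma base_less: "(\<forall>i<n. f i < (q::nat) \<and> h i < q) \<Longrightarrow>
  ((\<Sum>i<n. f i * q^i) < (\<Sum>i<n. h i * q^i) \<longleftrightarrow>
  (\<exists>i<n. f i \<noteq> h i \<and> (\<forall>j. i < j \<and> j < n \<longrightarrow> f j = h j) \<and> f i < h i))"
proof (induction n)
  case 0 then show ?case by simp
next
  case (Suc n)
  have bf: "(\<Sum>i<n. f i * q^i) < q^n" using base_bound[of n f q] Suc.prems by auto
  have bh: "(\<Sum>i<n. h i * q^i) < q^n" using base_bound[of n h q] Suc.prems by auto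
  have IH: "(\<Sum>i<n. f i * q^i) < (\<Sum>i<n. h i * q^i) \<longleftrightarrow>
    (\<exists>i<n. f i \<noteq> h i \<and> (\<forall>j. i < j \<and> j < n \<longrightarrow> f j = h j) \<and> f i < h i)"
    using Suc by simp
  have sf: "(\<Sum>i<Suc n. f i * q^i) = (\<Sum>i<n. f i * q^i) + f n * q^n" by simp
  have sh: "(\<Sum>i<Suc n. h i * q^i) = (\<Sum>i<n. h i * q^i) + h n * q^n" by simp
  consider "f n = h n" | "f n < h n" | "h n < f n" by linarith
  then show ?case
  proof cases
    case 1
    have "(\<exists>i<n. f i \<noteq> h i \<and> (\<forall>j. i < j \<and> j < n \<longrightarrow> f j = h j) \<and> f i < h i) \<longleftrightarrow>
      (\<exists>i<Suc n. f i \<noteq> h i \<and> (\<forall>j. i < j \<and> j < Suc n \<longrightarrow> f j = h j) \<and> f i < h i)"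
    proof
      assume "\<exists>i<n. f i \<noteq> h i \<and> (\<forall>j. i < j \<and> j < n \<longrightarrow> f j = h j) \<and> f i < h i"
      then obtain i where i: "i<n" "f i \<noteq> h i" "\<forall>j. i < j \<and> j < n \<longrightarrow> f j = h j" "f i < h i" by blast
      have "\<forall>j. i < j \<and> j < Suc n \<longrightarrow> f j = h j"
        using i(3) 1 less_Suc_eq by auto
      then show "\<exists>i<Suc n. f i \<noteq> h i \<and> (\<forall>j. i < j \<and> j < Suc n \<longrightarrow> f j = h j) \<and> f i < h i"
        using i by (intro exI[of _ i]) auto
    next
      assume "\<exists>i<Suc n. f i \<noteq> h i \<and> (\<forall>j. i < j \<and> j < Suc n \<longrightarrow> f j = h j) \<and> f i < h i"
      then obtain i where i: "i<Suc n" "f i \<noteq> h i" "\<forall>j. i < j \<and> j < Suc n \<longrightarrow> f j = h j" "f i < h i" by blast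
      have "i \<noteq> n" using i(2) 1 by auto
      then have "i < n" using i(1) by simp
      then show "\<exists>i<n. f i \<noteq> h i \<and> (\<forall>j. i < j \<and> j < n \<longrightarrow> f j = h j) \<and> f i < h i"
        using i by (intro exI[of _ i]) auto
    qed
    then show ?thesis using IH sf sh 1 by simp
  next
    case 2
    have "(\<Sum>i<n. f i * q^i) + f n * q^n < q^n + f n * q^n" using bf by simp
    also have "\<dots> = (f n + 1) * q^n" by simp
    also have "\<dots> \<le> h n * q^n" using 2 by (intro mult_right_mono) auto
    also have "\<dots> \<le> (\<Sum>i<n. h i * q^i) + h n * q^n" by simp
    finally have "(\<Sum>i<Suc n. f i * q^i) < (\<Sum>i<Suc n. h i * q^i)" using sf sh by simp
    moreover have "\<exists>i<Suc n. f i \<noteq> h i \<and> (\<forall>j. i < j \<and> j < Suc n \<longrightarrow> f j = h j) \<and> f i < h i"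
      using 2 by (intro exI[of _ n]) auto
    ultimately show ?thesis by simp
  next
    case 3
    have "(\<Sum>i<n. h i * q^i) + h n * q^n < q^n + h n * q^n" using bh by simp
    also have "\<dots> = (h n + 1) * q^n" by simp
    also have "\<dots> \<le> f n * q^n" using 3 by (intro mult_right_mono) auto
    also have "\<dots> \<le> (\<Sum>i<n. f i * q^i) + f n * q^n" by simp
    finally have "\<not> (\<Sum>i<Suc n. f i * q^i) < (\<Sum>i<Suc n. h i * q^i)" using sf sh by simp
    moreover have "\<not> (\<exists>i<Suc n. f i \<noteq> h i \<and> (\<forall>j. i < j \<and> j < Suc n \<longrightarrow> f j = h j) \<and> f i < h i)"
    proof
      assume "\<exists>i<Suc n. f i \<noteq> h i \<and> (\<forall>j. i < j \<and> j < Suc n \<longrightarrow> f j = h j) \<and> f i < h i"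
      then obtain i where i: "i<Suc n" "\<forall>j. i < j \<and> j < Suc n \<longrightarrow> f j = h j" "f i < h i" by blast
      show False
      proof (cases "i = n")
        case True then show False using i(3) 3 by simp
      next
        case False then have "i < n" using i(1) by simp
        then have "f n = h n" using i(2) by simp
        then show False using 3 by simp
      qed
    qed
    ultimately show ?thesis by simp
  qed
qed

lemma base_top: "(\<forall>i<(n::nat). f i = h i) \<or> (\<exists>i<n. f i \<noteq> h i \<and> (\<forall>j. i < j \<and> j < n \<longrightarrow> f j = h j))"
proof (induction n)
  case 0 then show ?case by simp
next
  case (Suc n)
  show ?case
  proof (cases "f n = h n")
    case False
    then show ?thesis by (intro disjI2 exI[of _ n]) auto
  next
    case True
    from Suc.IH show ?thesis
    proof
      assume "\<forall>i<n. f i = h i"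
      then have "\<forall>i<Suc n. f i = h i" using True less_Suc_eq by auto
      then show ?thesis by blast
    next
      assume "\<exists>i<n. f i \<noteq> h i \<and> (\<forall>j. i < j \<and> j < n \<longrightarrow> f j = h j)"
      then obtain i where i: "i<n" "f i \<noteq> h i" "\<forall>j. i < j \<and> j < n \<longrightarrow> f j = h j" by blast
      have "\<forall>j. i < j \<and> j < Suc n \<longrightarrow> f j = h j" using i(3) True less_Suc_eq by auto
      then show ?thesis using i by (intro disjI2 exI[of _ i]) auto
    qed
  qed
qed

context cr
begin

lemma tidx_e: "j < q \<Longrightarrow> tidx q e (e j) = j"
  unfolding tidx_def by (rule the_equality) (auto dest: inj_onD[OF e_inj])

lemma tidx_T: "t \<in> T \<Longrightarrow> tidx q e t < q \<and> e (tidx q e t) = t"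
proof -
  assume "t \<in> T"
  then obtain j where "j < q" "t = e j" by (auto simp: T_def)
  then show ?thesis using tidx_e by simp
qed

lemma tidx_inj: "t \<in> T \<Longrightarrow> t' \<in> T \<Longrightarrow> tidx q e t = tidx q e t' \<Longrightarrow> t = t'"
  using tidx_T by metis

definition N :: "'a \<Rightarrow> nat" where
  "N r = (\<Sum>i<s. tidx q e (digits g s q e r ! i) * q ^ i)"

lemma dig_T: "i < s \<Longrightarrow> digits g s q e r ! i \<in> T"
  using digits_prop[of r] nth_mem[of i "digits g s q e r"] by auto

lemma ring_less_N: "ring_less g s q e y r \<longleftrightarrow> N y < N r"
proof -
  let ?f = "\<lambda>i. tidx q e (digits g s q e y ! i)"
  let ?h = "\<lambda>i. tidx q e (digits g s q e r ! i)"
  have eqv: "\<And>i. i < s \<Longrightarrow> (digits g s q e y ! i = digits g s q e r ! i) \<longleftrightarrow> ?f i = ?h i"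
  proof
    fix i assume "i < s" "?f i = ?h i"
    then show "digits g s q e y ! i = digits g s q e r ! i" using dig_T tidx_inj by blast
  qed simp
  have bnd: "\<forall>i<s. ?f i < q \<and> ?h i < q" by (simp add: dig_T tidx_T)
  have BL: "N y < N r \<longleftrightarrow> (\<exists>i<s. ?f i \<noteq> ?h i \<and> (\<forall>j. i < j \<and> j < s \<longrightarrow> ?f j = ?h j) \<and> ?f i < ?h i)"
    unfolding N_def by (rule base_less[OF bnd])
  show ?thesis
  proof
    assume "ring_less g s q e y r"
    then obtain i where i: "i < s" "\<forall>j. i < j \<and> j < s \<longrightarrow> digits g s q e y ! j = digits g s q e r ! j"
      "?f i < ?h i" unfolding ring_less_def by blast
    have "\<forall>j. i < j \<and> j < s \<longrightarrow> ?f j = ?h j" using i(2) by simp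
    moreover have "?f i \<noteq> ?h i" using i(3) by simp
    ultimately show "N y < N r" using BL i(1,3) by blast
  next
    assume "N y < N r"
    then obtain i where i: "i < s" "\<forall>j. i < j \<and> j < s \<longrightarrow> ?f j = ?h j" "?f i < ?h i"
      using BL by blast
    have "\<forall>j. i < j \<and> j < s \<longrightarrow> digits g s q e y ! j = digits g s q e r ! j"
      using i(2) eqv by blast
    moreover have "digits g s q e y ! i \<noteq> digits g s q e r ! i" using i(3) by auto
    ultimately show "ring_less g s q e y r" unfolding ring_less_def using i(1,3) by blast
  qed
qed

lemma N_bound: "N r < q ^ s"
  unfolding N_def by (rule base_bound) (simp add: dig_T tidx_T)

lemma N_inj: "inj N"
proof (rule injI)
  fix x y assume eq: "N x = N y"
  let ?f = "\<lambda>i. tidx q e (digits g s q e x ! i)"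
  let ?h = "\<lambda>i. tidx q e (digits g s q e y ! i)"
  have bnd: "\<forall>i<s. ?f i < q \<and> ?h i < q" using dig_T tidx_T by blast
  have bnd': "\<forall>i<s. ?h i < q \<and> ?f i < q" using dig_T tidx_T by blast
  have "\<forall>i<s. ?f i = ?h i"
  proof (rule ccontr)
    assume "\<not> (\<forall>i<s. ?f i = ?h i)"
    then obtain i where i: "i < s" "?f i \<noteq> ?h i" "\<forall>j. i < j \<and> j < s \<longrightarrow> ?f j = ?h j"
      using base_top[of s ?f ?h] by blast
    show False
    proof (cases "?f i < ?h i")
      case True
      then have "N x < N y" unfolding N_def using base_less[OF bnd] i by blast
      then show False using eq by simp
    next
      case False
      then have "?h i < ?f i" using i(2) by simp
      then have "N y < N x" unfolding N_def using base_less[OF bnd'] i by fastforce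
      then show False using eq by simp
    qed
  qed
  then have "\<forall>i<s. digits g s q e x ! i = digits g s q e y ! i" using dig_T tidx_inj by metis
  then have "digits g s q e x = digits g s q e y" using digits_prop[of x] digits_prop[of y]
    by (simp add: nth_equalityI)
  then show "x = y" using digits_prop[of x] digits_prop[of y] by metis
qed

lemma N_range: "range N = {..<q ^ s}"
proof -
  have "range N \<subseteq> {..<q ^ s}" using N_bound by auto
  moreover have "card (range N) = card {..<q ^ s}"
    using card_image[OF N_inj] card_UNIV_R by simp
  ultimately show ?thesis by (intro card_subset_eq) auto
qed

lemma card_less: "card {y. ring_less g s q e y r} = N r"
proof -
  have "{y. ring_less g s q e y r} = {y. N y < N r}" using ring_less_N by auto
  moreover have "N ` {y. N y < N r} = {..<N r}"
  proof
    show "N ` {y. N y < N r} \<subseteq> {..<N r}" by auto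
    show "{..<N r} \<subseteq> N ` {y. N y < N r}"
    proof
      fix j assume "j \<in> {..<N r}"
      then have "j \<in> range N" using N_range N_bound[of r] by auto
      then obtain y where "j = N y" by auto
      then show "j \<in> N ` {y. N y < N r}" using \<open>j \<in> {..<N r}\<close> by auto
    qed
  qed
  moreover have "card (N ` {y. N y < N r}) = card {y. N y < N r}"
    using card_image inj_on_subset[OF N_inj] by blast
  ultimately show ?thesis by simp
qed

lemma rho_N: "j < q ^ s \<Longrightarrow> N (rho g s q e j) = j"
proof -
  assume j: "j < q ^ s"
  then obtain r where r: "N r = j" using N_range by (metis imageE lessThan_iff)
  have "rho g s q e j = r" unfolding rho_def
  proof (rule the_equality)
    show "card {y. ring_less g s q e y r} = j" using card_less r by simp
    fix r' assume "card {y. ring_less g s q e y r'} = j"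
    then have "N r' = N r" using card_less r by simp
    then show "r' = r" using N_inj by (simp add: inj_eq)
  qed
  then show ?thesis using r by simp
qed

lemma rho_inj: "inj_on (rho g s q e) {..<q ^ s}"
  by (rule inj_onI) (metis lessThan_iff rho_N)

lemma rho_surj: "rho g s q e (N x) = x"
  using rho_N[OF N_bound[of x]] N_inj by (simp add: inj_eq)

end


lemma fiber_card:
  fixes L :: "'b::ab_group_add \<Rightarrow> 'c::ab_group_add"
  assumes fin: "finite V" and add: "\<And>x y. x \<in> V \<Longrightarrow> y \<in> V \<Longrightarrow> x + y \<in> V"
    and sub: "\<And>x y. x \<in> V \<Longrightarrow> y \<in> V \<Longrightarrow> x - y \<in> V"
    and lin: "\<And>x y. L (x + y) = L x + L y"
  shows "card V = card (L ` V) * card {x \<in> V. L x = 0}"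
proof -
  have Ldiff: "L (x - y) = L x - L y" for x y
    using lin[of "x - y" y] by (simp add: eq_diff_eq)
  have fib: "card {x \<in> V. L x = y} = card {x \<in> V. L x = 0}" if y: "y \<in> L ` V" for y
  proof -
    obtain x0 where x0: "x0 \<in> V" "L x0 = y" using y by auto
    have "{x \<in> V. L x = y} = (\<lambda>z. z + x0) ` {x \<in> V. L x = 0}"
    proof
      show "{x \<in> V. L x = y} \<subseteq> (\<lambda>z. z + x0) ` {x \<in> V. L x = 0}"
      proof
        fix x assume x: "x \<in> {x \<in> V. L x = y}"
        then have "x - x0 \<in> {x \<in> V. L x = 0}" using sub x0 Ldiff by auto
        moreover have "x = (x - x0) + x0" by simp
        ultimately show "x \<in> (\<lambda>z. z + x0) ` {x \<in> V. L x = 0}" by (rule rev_image_eqI)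
      qed
      show "(\<lambda>z. z + x0) ` {x \<in> V. L x = 0} \<subseteq> {x \<in> V. L x = y}" using add x0 lin by auto
    qed
    moreover have "inj_on (\<lambda>z. z + x0) {x \<in> V. L x = 0}" by (auto intro: inj_onI)
    ultimately show ?thesis by (simp add: card_image)
  qed
  have "card V = (\<Sum>x\<in>V. 1)" by simp
  also have "\<dots> = (\<Sum>y\<in>L ` V. (\<Sum>x\<in>{x \<in> V. L x = y}. 1))"
    by (rule sum.image_gen[OF fin])
  also have "\<dots> = (\<Sum>y\<in>L ` V. card {x \<in> V. L x = 0})"
    by (rule sum.cong) (simp_all add: fib)
  also have "\<dots> = card (L ` V) * card {x \<in> V. L x = 0}" by simp
  finally show ?thesis .
qed

context cr
begin

definition col :: "nat \<Rightarrow> nat \<Rightarrow> nat \<Rightarrow> 'a" where "col k c = (\<lambda>r. genmat g s q e k r c)"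
definition V :: "nat \<Rightarrow> (nat \<Rightarrow> 'a) set" where "V k = {x. \<forall>r\<ge>k. x r = 0}"

lemma Q_pos: "q ^ s > 0" using q_pos by simp

lemma genmat_zero: "k \<le> r \<Longrightarrow> genmat g s q e k r c = 0"
proof (induction k arbitrary: r c)
  case 0 then show ?case by simp
next
  case (Suc k)
  then have "r \<noteq> 0" "k \<le> r - 1" by auto
  then show ?case using Suc.IH by simp
qed

lemma col_inj: "inj_on (col k) {..<(q^s)^k}"
proof (induction k)
  case 0 show ?case by (auto intro: inj_onI)
next
  case (Suc k)
  show ?case
  proof (rule inj_onI)
    fix a b assume a: "a \<in> {..<(q^s)^Suc k}" and b: "b \<in> {..<(q^s)^Suc k}"
      and eq: "col (Suc k) a = col (Suc k) b"
    have Qk: "(q^s)^k > 0" using Q_pos by simp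
    have ad: "a div (q^s)^k < q^s" using a by (intro less_mult_imp_div_less) (simp add: power_Suc)
    have bd: "b div (q^s)^k < q^s" using b by (intro less_mult_imp_div_less) (simp add: power_Suc)
    have "rho g s q e (a div (q^s)^k) = rho g s q e (b div (q^s)^k)"
      using fun_cong[OF eq, of 0] by (simp add: col_def)
    then have d: "a div (q^s)^k = b div (q^s)^k" using inj_onD[OF rho_inj] ad bd by simp
    have "col k (a mod (q^s)^k) = col k (b mod (q^s)^k)"
    proof
      fix r show "col k (a mod (q^s)^k) r = col k (b mod (q^s)^k) r"
        using fun_cong[OF eq, of "Suc r"] by (simp add: col_def)
    qed
    moreover have "a mod (q^s)^k \<in> {..<(q^s)^k}" "b mod (q^s)^k \<in> {..<(q^s)^k}" using Qk by auto
    ultimately have m: "a mod (q^s)^k = b mod (q^s)^k" using Suc.IH by (auto dest: inj_onD)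
    show "a = b" using d m by (metis div_mult_mod_eq)
  qed
qed

lemma col_img: "col k ` {..<(q^s)^k} = V k"
proof (induction k)
  case 0
  have "V 0 = {\<lambda>_. 0}" by (auto simp: V_def)
  then show ?case by (auto simp: col_def)
next
  case (Suc k)
  show ?case
  proof
    show "col (Suc k) ` {..<(q^s)^Suc k} \<subseteq> V (Suc k)" by (auto simp: col_def V_def genmat_zero)
    show "V (Suc k) \<subseteq> col (Suc k) ` {..<(q^s)^Suc k}"
    proof
      fix x assume x: "x \<in> V (Suc k)"
      have "(\<lambda>r. x (Suc r)) \<in> V k" using x by (auto simp: V_def)
      then obtain c' where c': "c' < (q^s)^k" "col k c' = (\<lambda>r. x (Suc r))" using Suc.IH
        by (metis imageE lessThan_iff)
      define j where "j = N (x 0)"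
      have j: "j < q^s" "rho g s q e j = x 0" using N_bound rho_surj j_def by auto
      define c where "c = j * (q^s)^k + c'"
      have "c < j * (q^s)^k + (q^s)^k" using c' by (simp add: c_def)
      also have "\<dots> = (j + 1) * (q^s)^k" by simp
      also have "\<dots> \<le> q^s * (q^s)^k" using j(1) by (intro mult_right_mono) auto
      finally have clt: "c < (q^s)^Suc k" by (simp add: power_Suc)
      have c2: "c = c' + j * (q^s)^k" by (simp add: c_def)
      have Qk: "(q^s)^k \<noteq> 0" using q_pos by simp
      have cd: "c div (q^s)^k = j" unfolding c2 using c' Qk by (simp add: div_mult_self1 div_less)
      have cm: "c mod (q^s)^k = c'" unfolding c2 using c' by simp
      have "col (Suc k) c = x"
      proof
        fix r show "col (Suc k) c r = x r"
        proof (cases r)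
          case 0 then show ?thesis using j cd by (simp add: col_def)
        next
          case (Suc r') then show ?thesis using cm fun_cong[OF c'(2), of r'] by (simp add: col_def)
        qed
      qed
      then show "x \<in> col (Suc k) ` {..<(q^s)^Suc k}" using clt by auto
    qed
  qed
qed

lemma card_V: "card (V k) = (q^s)^k"
  using card_image[OF col_inj[of k]] col_img[of k] by simp

lemma finite_V: "finite (V k)"
  using col_img[of k] by (metis finite_imageI finite_lessThan)

end


context cr
begin

lemma main:
  assumes k: "k \<ge> 1" and cc: "c \<in> code g s q e k" and nz: "c \<noteq> replicate (q ^ (s * k)) 0"
  shows "hamming_weight c = q ^ (s * k) - q ^ (the_enat (val_vec g c) + s * (k - 1))"
proof -
  obtain a where ca: "c = map (\<lambda>cl. \<Sum>r<k. a r * genmat g s q e k r cl) [0..<q ^ (s * k)]"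
    using cc unfolding code_def by blast
  define L where "L = (\<lambda>x::nat \<Rightarrow> 'a. \<Sum>r<k. a r * x r)"
  have QK: "q ^ (s * k) = (q^s)^k" by (simp add: power_mult)
  have cL: "c = map (\<lambda>cl. L (col k cl)) [0..<(q^s)^k]" using ca QK by (simp add: L_def col_def)
  have "set c = (\<lambda>cl. L (col k cl)) ` {..<(q^s)^k}" using cL by (simp add: atLeast0LessThan)
  also have "\<dots> = L ` (col k ` {..<(q^s)^k})" by (simp add: image_image)
  finally have setc: "set c = L ` V k" using col_img by simp
  have nzA: "\<exists>r<k. a r \<noteq> 0"
  proof (rule ccontr)
    assume "\<not> (\<exists>r<k. a r \<noteq> 0)"
    then have "\<And>x. L x = 0" unfolding L_def by simp
    then have "c = map (\<lambda>cl. 0) [0..<(q^s)^k]" using cL by simp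
    then have "c = replicate (q ^ (s * k)) 0" using QK by (simp add: map_replicate_const)
    with nz show False by simp
  qed
  define M where "M = Min ((\<lambda>r. val g (a r)) ` {..<k})"
  have fin: "finite ((\<lambda>r. val g (a r)) ` {..<k})" by simp
  have "0 \<in> {..<k}" using k by simp
  then have ne: "(\<lambda>r. val g (a r)) ` {..<k} \<noteq> {}" by blast
  obtain r0 where r0: "r0 < k" "val g (a r0) = M"
    using Min_in[OF fin ne] unfolding M_def by auto
  have Mle: "\<And>r. r < k \<Longrightarrow> M \<le> val g (a r)" unfolding M_def using fin by simp
  have ar0: "a r0 \<noteq> 0"
  proof
    assume "a r0 = 0"
    then have "M = \<infinity>" using r0 val_zero by simp
    obtain r1 where r1: "r1 < k" "a r1 \<noteq> 0" using nzA by blast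
    obtain n1 where "val g (a r1) = enat n1" using val_fin[OF r1(2)] by blast
    then show False using Mle[OF r1(1)] \<open>M = \<infinity>\<close> by simp
  qed
  obtain m u0 where m: "m < s" "u0 dvd 1" "a r0 = g^m * u0" "val g (a r0) = enat m"
    using val_fin[OF ar0] by blast
  have bex: "\<forall>r\<in>{..<k}. \<exists>b. a r = g^m * b"
  proof
    fix r assume "r \<in> {..<k}"
    then have r: "r < k" by simp
    show "\<exists>b. a r = g^m * b"
    proof (cases "a r = 0")
      case True then show ?thesis by (intro exI[of _ 0]) simp
    next
      case False
      then obtain n u where nu: "u dvd 1" "a r = g^n * u" "val g (a r) = enat n"
        using val_fin by blast
      have "enat m \<le> enat n" using Mle[OF r] nu(3) r0(2) m(4) by simp
      then have "m \<le> n" by simp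
      then have "g^n = g^m * g^(n-m)" by (simp flip: power_add)
      then have "a r = g^m * (g^(n-m) * u)" using nu(2) by (simp add: mult.assoc)
      then show ?thesis by blast
    qed
  qed
  from bchoice[OF bex] obtain b where b: "\<forall>r\<in>{..<k}. a r = g^m * b r" by blast
  have imgL: "L ` V k = I m"
  proof
    show "L ` V k \<subseteq> I m"
    proof
      fix y assume "y \<in> L ` V k"
      then obtain x where y: "y = L x" by blast
      have "L x = (\<Sum>r<k. g^m * (b r * x r))" unfolding L_def
        by (rule sum.cong) (use b in \<open>auto simp: mult.assoc\<close>)
      also have "\<dots> = g^m * (\<Sum>r<k. b r * x r)" by (simp add: sum_distrib_left)
      finally show "y \<in> I m" using y by (auto simp: I_def)
    qed
    show "I m \<subseteq> L ` V k"
    proof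
      fix y assume "y \<in> I m"
      then obtain t where t: "y = g^m * t" by (auto simp: I_def)
      obtain v where v: "1 = u0 * v" using m(2) by (auto elim: dvdE)
      define x where "x = (\<lambda>r. if r = r0 then v * t else 0)"
      have xV: "x \<in> V k" using r0(1) by (auto simp: V_def x_def)
      have "L x = (\<Sum>r<k. (if r = r0 then a r0 * (v * t) else 0))"
        unfolding L_def by (rule sum.cong) (auto simp: x_def)
      also have "\<dots> = a r0 * (v * t)" using r0(1) by simp
      also have "\<dots> = g^m * (u0 * v) * t" using m(3) by (simp add: mult.assoc)
      also have "\<dots> = y" using v t by simp
      finally show "y \<in> L ` V k" using xV by (auto intro: rev_image_eqI)
    qed
  qed
  have lin: "\<And>x y. L (x + y) = L x + L y"
    unfolding L_def by (simp add: distrib_left sum.distrib)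
  have fc: "card (V k) = card (L ` V k) * card {x \<in> V k. L x = 0}"
  proof (rule fiber_card)
    show "finite (V k)" by (rule finite_V)
    show "L (x + y) = L x + L y" for x y by (rule lin)
  qed (auto simp: V_def)
  define K where "K = card {x \<in> V k. L x = 0}"
  have "q ^ (s * k) = q ^ (s - m) * K" using fc card_V imgL card_I[of m] m(1) QK
    by (simp add: K_def)
  moreover have "q ^ (s * k) = q ^ (s - m) * q ^ (m + s * (k - 1))"
  proof -
    have "s * k = (s - m) + (m + s * (k - 1))" using m(1) k
      by (cases k) (auto simp: algebra_simps)
    then show ?thesis by (metis power_add)
  qed
  ultimately have KK: "K = q ^ (m + s * (k - 1))" using q_pos by simp
  have vv: "val_vec g c = enat m"
    unfolding val_vec_def setc imgL
  proof (rule antisym)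
    have "g^m \<in> I m" by (auto simp: I_def intro: exI[of _ 1] rev_image_eqI[of 1])
    moreover have "val g (g^m) = enat m" using val_eq[of "g^m" 1 m] gpow_nz[OF m(1)] by simp
    ultimately show "(INF x\<in>I m. val g x) \<le> enat m" by (metis INF_lower)
    show "enat m \<le> (INF x\<in>I m. val g x)"
    proof (rule INF_greatest)
      fix y assume "y \<in> I m"
      then obtain t where t: "y = g^m * t" by (auto simp: I_def)
      show "enat m \<le> val g y"
      proof (cases "y = 0")
        case True then show ?thesis by (simp add: val_zero)
      next
        case False then show ?thesis using val_ge t by blast
      qed
    qed
  qed
  have "hamming_weight c = card {i. i < (q^s)^k \<and> L (col k i) \<noteq> 0}"
    unfolding hamming_weight_def cL
    by (simp add: length_filter_conv_card cong: conj_cong)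
  also have "\<dots> = card (col k ` {i. i < (q^s)^k \<and> L (col k i) \<noteq> 0})"
    by (rule card_image[symmetric]) (rule inj_on_subset[OF col_inj], auto)
  also have "col k ` {i. i < (q^s)^k \<and> L (col k i) \<noteq> 0} = V k - {x \<in> V k. L x = 0}"
    using col_img[of k] by auto
  also have "card (V k - {x \<in> V k. L x = 0}) = card (V k) - K"
    unfolding K_def by (rule card_Diff_subset) (auto intro: finite_subset[OF _ finite_V])
  finally show ?thesis using card_V KK vv QK by simp
qed

end


theorem corollary3p10:
  fixes g :: "'a::{comm_ring_1,finite}" and s q k :: nat and e :: "nat \<Rightarrow> 'a"
    and c :: "'a list"
  assumes "chain_ring_setup g s q e"
    and "k \<ge> 1"
    and "c \<in> code g s q e k"
    and "c \<noteq> replicate (q ^ (s * k)) 0"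
  shows "hamming_weight c = q ^ (s * k) - q ^ (the_enat (val_vec g c) + s * (k - 1))"
  using cr.main[OF cr.intro[OF assms(1)] assms(2) assms(3) assms(4)] .

end
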